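(* Let $G=(V,E)$ be a graph with a partition $(V_1,V_2)$ of $V$ such that $G[V_1]$ and $G[V_2]$ are $P_5$-free, and let $k$ be an integer. Suppose that: $k\ge 1$; $G$ contains a $P_5$; every vertex of $G$ lies on some $P_5$ in $G$; every $P_5$ in $G$ contains at least $4$ vertices of $V_2$; and there is no vertex $v\in V_2$ that is isolated in $G[V_2]$ and for which there is a path $(v,w,x,y,z)$ in $G$ with $w\in V_1$. Then $G[V_2]$ has no isolated vertices.
   Context: Graphs are finite, simple and undirected. A $P_5$ is a path on $5$ vertices (as a not necessarily induced subgraph), written as the sequence of its vertices; a graph is $P_5$-free if it contains no $P_5$. $G[X]$ denotes the subgraph induced by $X$. *)

theory Defs
  imports Main
begin

definition graph :: "'a set \<Rightarrow> ('a \<Rightarrow> 'a \<Rightarrow> bool) \<Rightarrow> bool" where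
  "graph V E \<longleftrightarrow> finite V \<and> (\<forall>u v. E u v \<longrightarrow> E v u) \<and> (\<forall>v. \<not> E v v)
     \<and> (\<forall>u v. E u v \<longrightarrow> u \<in> V \<and> v \<in> V)"

text \<open>A P5 (not necessarily induced) in the subgraph induced by X, written as the
list of its vertices: five distinct vertices of X, consecutive ones adjacent.\<close>
definition is_P5_in :: "'a set \<Rightarrow> ('a \<Rightarrow> 'a \<Rightarrow> bool) \<Rightarrow> 'a list \<Rightarrow> bool" where
  "is_P5_in X E p \<longleftrightarrow> length p = 5 \<and> distinct p \<and> set p \<subseteq> X
     \<and> (\<forall>i < 4. E (p ! i) (p ! Suc i))"

definition P5_free :: "'a set \<Rightarrow> ('a \<Rightarrow> 'a \<Rightarrow> bool) \<Rightarrow> bool" where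
  "P5_free X E \<longleftrightarrow> \<not> (\<exists>p. is_P5_in X E p)"

definition isolated_in :: "'a set \<Rightarrow> ('a \<Rightarrow> 'a \<Rightarrow> bool) \<Rightarrow> 'a \<Rightarrow> bool" where
  "isolated_in X E v \<longleftrightarrow> v \<in> X \<and> (\<forall>u\<in>X. \<not> E v u)"

end

theory Submission
  imports Defs
begin

lemma P5_expand:
  "is_P5_in X E [a,b,c,d,e] \<longleftrightarrow> distinct [a,b,c,d,e] \<and> {a,b,c,d,e} \<subseteq> X
     \<and> E a b \<and> E b c \<and> E c d \<and> E d e"
proof -
  have "(\<forall>i<4. E ([a,b,c,d,e] ! i) ([a,b,c,d,e] ! Suc i)) \<longleftrightarrow>
        E a b \<and> E b c \<and> E c d \<and> E d e"
    by (simp add: numeral_eq_Suc less_Suc_eq) blast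
  thus ?thesis unfolding is_P5_in_def by auto
qed

lemma len5: "length p = 5 \<Longrightarrow> \<exists>a b c d e. p = [a,b,c,d,e]"
  by (cases p; cases "tl p"; cases "tl (tl p)"; cases "tl (tl (tl p))";
      cases "tl (tl (tl (tl p)))"; auto simp: numeral_eq_Suc)

lemma card3: "finite A \<Longrightarrow> A \<subseteq> {x,y,z} \<Longrightarrow> card A \<le> 3"
proof -
  assume "A \<subseteq> {x,y,z}"
  hence "card A \<le> card {x,y,z}" by (intro card_mono) auto
  also have "card {x,y,z} \<le> 3" by (simp add: card_insert_if)
  finally show ?thesis .
qed

theorem lemma4:
  fixes V V1 V2 :: "'a set" and E :: "'a \<Rightarrow> 'a \<Rightarrow> bool" and k :: int
  assumes "graph V E"
    and "V1 \<union> V2 = V" and "V1 \<inter> V2 = {}"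
    and "P5_free V1 E" and "P5_free V2 E"
    and "k \<ge> 1"
    and "\<exists>p. is_P5_in V E p"
    and "\<forall>v\<in>V. \<exists>p. is_P5_in V E p \<and> v \<in> set p"
    and "\<forall>p. is_P5_in V E p \<longrightarrow> card (set p \<inter> V2) \<ge> 4"
    and "\<not> (\<exists>v\<in>V2. isolated_in V2 E v \<and>
              (\<exists>w x y z. is_P5_in V E [v, w, x, y, z] \<and> w \<in> V1))"
  shows "\<not> (\<exists>v. isolated_in V2 E v)"
proof
  assume "\<exists>v. isolated_in V2 E v"
  then obtain v where iso: "isolated_in V2 E v" by blast
  hence vV2: "v \<in> V2" and nb: "\<And>u. u \<in> V2 \<Longrightarrow> \<not> E v u" unfolding isolated_in_def by auto
  have sym: "\<And>u w. E u w \<Longrightarrow> E w u" using assms(1) unfolding graph_def by blast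
  have vV: "v \<in> V" using vV2 assms(2) by blast
  then obtain p where p: "is_P5_in V E p" "v \<in> set p" using assms(8) by blast
  have "length p = 5" using p unfolding is_P5_in_def by auto
  then obtain a b c d e where pe: "p = [a,b,c,d,e]" using len5 by blast
  have P: "distinct [a,b,c,d,e]" "{a,b,c,d,e} \<subseteq> V" "E a b" "E b c" "E c d" "E d e"
    using p(1) unfolding pe P5_expand by auto
  have c4: "card ({a,b,c,d,e} \<inter> V2) \<ge> 4" using assms(9) p(1) pe by (metis list.set(1) list.set(2))
  have rv: "is_P5_in V E [e,d,c,b,a]" unfolding P5_expand using P sym by auto
  have V1of: "\<And>u. u \<in> V \<Longrightarrow> u \<notin> V2 \<Longrightarrow> u \<in> V1" using assms(2) by blast
  have vcases: "v = a \<or> v = b \<or> v = c \<or> v = d \<or> v = e" using p(2) pe by auto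
  show False
  proof -
    { assume "v = a"
      hence "is_P5_in V E [v,b,c,d,e]" "b \<in> V1" using p(1) pe P nb V1of by auto
      hence ?thesis using assms(10) vV2 iso by blast }
    moreover
    { assume "v = e"
      hence "is_P5_in V E [v,d,c,b,a]" "d \<in> V1" using rv P nb V1of sym by auto
      hence ?thesis using assms(10) vV2 iso by blast }
    moreover
    { assume "v = b"
      hence "a \<notin> V2" "c \<notin> V2" using nb P sym by auto
      hence "{a,b,c,d,e} \<inter> V2 \<subseteq> {b,d,e}" by auto
      hence False using c4 card3[of "{a,b,c,d,e} \<inter> V2"] by auto }
    moreover
    { assume "v = c"
      hence "b \<notin> V2" "d \<notin> V2" using nb P sym by auto
      hence "{a,b,c,d,e} \<inter> V2 \<subseteq> {a,c,e}" by auto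
      hence False using c4 card3[of "{a,b,c,d,e} \<inter> V2"] by auto }
    moreover
    { assume "v = d"
      hence "c \<notin> V2" "e \<notin> V2" using nb P sym by auto
      hence "{a,b,c,d,e} \<inter> V2 \<subseteq> {a,b,d}" by auto
      hence False using c4 card3[of "{a,b,c,d,e} \<inter> V2"] by auto }
    ultimately show False using vcases by blast
  qed
qed

end
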